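(* Let $N, L \ge 1$ be integers and let $\Delta = (\delta_{ij})_{1\le i,j\le N}$ be a real $N\times N$ matrix of dissimilarities. For $\mathbf{z} = (x_{11},\dots,x_{1L},\dots,x_{N1},\dots,x_{NL})^T \in \mathbb{R}^{N L}$, write $\mathbf{x}_i = (x_{i1},\dots,x_{iL})^T \in \mathbb{R}^L$, $d_{ij}(\mathbf{z}) = \|\mathbf{x}_i - \mathbf{x}_j\|_2$, and $$g(\mathbf{z}) = \frac{1}{N^2}\sum_{i=1}^N\sum_{j=1}^N \big(d_{ij}(\mathbf{z}) - \delta_{ij}\big)^2 .$$ Let $\mathbf{z}^{(0)} \in \mathbb{R}^{NL}$ and $\Delta^{(0)} > 0$, and let $(\mathbf{z}^{(k)}, \Delta^{(k)})_{k\ge 0}$ be the infinite sequence generated by pattern search MDS as described in the context. Assume that the level set $\{\mathbf{z} \in \mathbb{R}^{NL} : g(\mathbf{z}) \le g(\mathbf{z}^{(0)})\}$ is closed and bounded and that $g$ is continuously differentiable on $\bigcup_{\mathbf{a}} B(\mathbf{a},\eta)$, the union over all $\mathbf{a}$ in this level set of the open balls of some fixed radius $\eta > 0$. Then $$\liminf_{k\to\infty} \|\nabla g(\mathbf{z}^{(k)})\| = 0 .$$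
   Context: Pattern search MDS (monotone version). Let $\mathbf{e}_1,\dots,\mathbf{e}_{NL}$ be the standard unit vectors of $\mathbb{R}^{NL}$; the coordinates belonging to point $i$ are those with indices $(i-1)L+1,\dots,iL$. Iteration $k$ (an "epoch") proceeds as follows. Set $\mathbf{y}_0 = \mathbf{z}^{(k)}$. For $i = 1,\dots,N$ in turn: among the $2L$ candidate points $\mathbf{y}_{i-1} \pm \Delta^{(k)} \mathbf{e}_{(i-1)L+l}$, $l = 1,\dots,L$ (moves of point $\mathbf{x}_i$ by $\pm\Delta^{(k)}$ along one coordinate axis of $\mathbb{R}^L$), take one with the smallest value of $g$; if that value is strictly smaller than $g(\mathbf{y}_{i-1})$, set $\mathbf{y}_i$ equal to that candidate, otherwise set $\mathbf{y}_i = \mathbf{y}_{i-1}$. Then set $\mathbf{z}^{(k+1)} = \mathbf{y}_N$ (so the step is $\mathbf{z}^{(k+1)} - \mathbf{z}^{(k)} = \Delta^{(k)}\hat{\mathbf{s}}^{(k)}$ with $\hat{\mathbf{s}}^{(k)}$ a sum of signed unit vectors, one or none per point). If $g(\mathbf{z}^{(k+1)}) < g(\mathbf{z}^{(k)})$ (successful iteration) set $\Delta^{(k+1)} = \Delta^{(k)}$; otherwise (unsuccessful iteration) $\mathbf{z}^{(k+1)} = \mathbf{z}^{(k)}$ and $\Delta^{(k+1)} = \tfrac{1}{2}\Delta^{(k)}$. *)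

theory Defs
  imports "HOL-Analysis.Analysis" "HOL-Library.Extended_Real"
begin

text \<open>A configuration z in R^{NL} is a vector of N points (indexed by the finite
linearly ordered type 'n, card = N) each in R^L (indexed by the finite type 'l).\<close>

definition mds_stress :: "real^'n^'n \<Rightarrow> real^'l^'n::finite \<Rightarrow> real" where
  "mds_stress \<delta> z = (1 / (real CARD('n))^2) *
     (\<Sum>i\<in>UNIV. \<Sum>j\<in>UNIV. (norm (z$i - z$j) - \<delta>$i$j)^2)"

definition ps_move :: "real^'l^'n \<Rightarrow> 'n \<Rightarrow> 'l \<Rightarrow> real \<Rightarrow> real \<Rightarrow> real^'l^'n" where
  "ps_move y i l s D = (\<chi> j. if j = i then y$j + ((s * D) *\<^sub>R axis l 1) else y$j)"

definition ps_candidates :: "real^'l^'n \<Rightarrow> 'n \<Rightarrow> real \<Rightarrow> (real^'l^'n) set" where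
  "ps_candidates y i D = {ps_move y i l s D | l s. s \<in> {-1, 1}}"

definition ps_point_step ::
  "(real^'l^'n \<Rightarrow> real) \<Rightarrow> real \<Rightarrow> 'n \<Rightarrow> real^'l^'n \<Rightarrow> real^'l^'n \<Rightarrow> bool" where
  "ps_point_step g D i y y' \<longleftrightarrow>
     (\<exists>c\<in>ps_candidates y i D. (\<forall>c'\<in>ps_candidates y i D. g c \<le> g c') \<and>
        y' = (if g c < g y then c else y))"

inductive ps_sweep ::
  "(real^'l^'n \<Rightarrow> real) \<Rightarrow> real \<Rightarrow> 'n list \<Rightarrow> real^'l^'n \<Rightarrow> real^'l^'n \<Rightarrow> bool"
  for g D where
  "ps_sweep g D [] y y"
| "ps_point_step g D i y y1 \<Longrightarrow> ps_sweep g D is y1 y2 \<Longrightarrow> ps_sweep g D (i # is) y y2"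

definition ps_epoch ::
  "(real^('l::finite)^('n::{finite,linorder}) \<Rightarrow> real) \<Rightarrow> real \<Rightarrow> real^('l::finite)^('n::{finite,linorder}) \<Rightarrow> real^('l::finite)^('n::{finite,linorder}) \<Rightarrow> bool" where
  "ps_epoch g D z z' \<longleftrightarrow> ps_sweep g D (sorted_list_of_set (UNIV :: ('n::{finite,linorder}) set)) z z'"

definition pattern_search_seq ::
  "(real^('l::finite)^('n::{finite,linorder}) \<Rightarrow> real) \<Rightarrow> real^('l::finite)^('n::{finite,linorder}) \<Rightarrow> real
    \<Rightarrow> (nat \<Rightarrow> real^('l::finite)^('n::{finite,linorder})) \<Rightarrow> (nat \<Rightarrow> real) \<Rightarrow> bool" where
  "pattern_search_seq g z0 D0 z D \<longleftrightarrow>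
     z 0 = z0 \<and> D 0 = D0 \<and>
     (\<forall>k. ps_epoch g (D k) (z k) (z (Suc k)) \<and>
          D (Suc k) = (if g (z (Suc k)) < g (z k) then D k else D k / 2))"

definition gradient :: "('a::real_inner \<Rightarrow> real) \<Rightarrow> 'a \<Rightarrow> 'a" where
  "gradient f x = (THE v. GDERIV f x :> v)"

end

theory Submission
  imports Defs
begin

lemma dir_lemma:
  fixes g :: "'a::real_inner \<Rightarrow> real" and G :: "'a \<Rightarrow> 'a"
  assumes h: "0 < h"
    and der: "\<And>t. 0 \<le> t \<Longrightarrow> t \<le> h \<Longrightarrow> (g has_derivative (\<lambda>v. v \<bullet> G (x + t *\<^sub>R e))) (at (x + t *\<^sub>R e))"
    and ge: "g x \<le> g (x + h *\<^sub>R e)"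
  shows "\<exists>t. 0 < t \<and> t < h \<and> e \<bullet> G (x + t *\<^sub>R e) \<ge> 0"
proof -
  let ?f = "\<lambda>t. g (x + t *\<^sub>R e)"
  have d: "(?f has_derivative (\<lambda>s. (s *\<^sub>R e) \<bullet> G (x + t *\<^sub>R e))) (at t within {0..h})"
    if "0 \<le> t" "t \<le> h" for t
  proof -
    have "((\<lambda>t. x + t *\<^sub>R e) has_derivative (\<lambda>s. s *\<^sub>R e)) (at t within {0..h})"
      by (auto intro!: derivative_eq_intros)
    from has_derivative_compose[OF this der[OF that]] show ?thesis by simp
  qed
  obtain t where t: "t \<in> {0<..<h}" "?f h - ?f 0 = (h *\<^sub>R e) \<bullet> G (x + t *\<^sub>R e)"
    using mvt_simple[OF h, of ?f "\<lambda>t s. (s *\<^sub>R e) \<bullet> G (x + t *\<^sub>R e)"] d by auto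
  then have "h * (e \<bullet> G (x + t *\<^sub>R e)) \<ge> 0" using ge by simp
  then have "e \<bullet> G (x + t *\<^sub>R e) \<ge> 0" using h by (simp add: zero_le_mult_iff)
  then show ?thesis using t by auto
qed

lemma grad_small:
  fixes g :: "'a::euclidean_space \<Rightarrow> real" and G :: "'a \<Rightarrow> 'a"
  assumes L: "compact L" and eta: "0 < \<eta>"
    and der: "\<And>y. y \<in> (\<Union>a\<in>L. ball a \<eta>) \<Longrightarrow> (g has_derivative (\<lambda>v. v \<bullet> G y)) (at y)"
    and cont: "continuous_on (\<Union>a\<in>L. ball a \<eta>) G"
    and eps: "0 < \<epsilon>"
  shows "\<exists>\<delta>>0. \<forall>x\<in>L. \<forall>h. 0 < h \<longrightarrow> h < \<delta> \<longrightarrow>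
     (\<forall>b\<in>Basis. g x \<le> g (x + h *\<^sub>R b) \<and> g x \<le> g (x + h *\<^sub>R (-b))) \<longrightarrow> norm (G x) \<le> \<epsilon>"
proof -
  define K where "K = {x + y | x y. x \<in> L \<and> y \<in> cball (0::'a) (\<eta>/2)}"
  have cK: "compact K" unfolding K_def by (rule compact_sums[OF L compact_cball])
  have KU: "K \<subseteq> (\<Union>a\<in>L. ball a \<eta>)"
  proof
    fix z assume "z \<in> K"
    then obtain x y where "z = x + y" "x \<in> L" "norm y \<le> \<eta>/2" unfolding K_def by auto
    then show "z \<in> (\<Union>a\<in>L. ball a \<eta>)" using eta by (auto simp: dist_norm intro!: bexI[of _ x])
  qed
  have uc: "uniformly_continuous_on K G"
    by (rule compact_uniformly_continuous[OF continuous_on_subset[OF cont KU] cK])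
  define e' where "e' = \<epsilon> / real DIM('a)"
  have e': "0 < e'" using eps unfolding e'_def by simp
  obtain d0 where d0: "d0 > 0" "\<forall>x\<in>K. \<forall>x'\<in>K. dist x' x < d0 \<longrightarrow> dist (G x') (G x) < e'"
    using uc e' unfolding uniformly_continuous_on_def by metis
  define d where "d = min d0 (\<eta>/2)"
  have inK: "x + y \<in> K" if "x \<in> L" "norm y \<le> \<eta>/2" for x y
    using that unfolding K_def by auto
  have one: "- e' < e \<bullet> G x"
    if x: "x \<in> L" and h: "0 < h" "h < d" and e: "norm e = 1" and ge: "g x \<le> g (x + h *\<^sub>R e)" for x h e
  proof -
    have "\<exists>t. 0 < t \<and> t < h \<and> e \<bullet> G (x + t *\<^sub>R e) \<ge> 0"
    proof (rule dir_lemma[OF h(1) _ ge])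
      fix t assume t: "0 \<le> t" "t \<le> h"
      have "norm (t *\<^sub>R e) \<le> \<eta>/2" using t h e unfolding d_def by simp
      then show "(g has_derivative (\<lambda>v. v \<bullet> G (x + t *\<^sub>R e))) (at (x + t *\<^sub>R e))"
        using KU inK[OF x] by (intro der) blast
    qed
    then obtain t where t: "0 < t" "t < h" "e \<bullet> G (x + t *\<^sub>R e) \<ge> 0" by blast
    have n: "norm (t *\<^sub>R e) = t" using t e by simp
    have "x + t *\<^sub>R e \<in> K" using inK[OF x, of "t *\<^sub>R e"] n t h unfolding d_def by simp
    moreover have "x \<in> K" using inK[OF x, of 0] eta by simp
    moreover have "dist (x + t *\<^sub>R e) x < d0" using n t h unfolding d_def by (simp add: dist_norm)
    ultimately have "dist (G (x + t *\<^sub>R e)) (G x) < e'" using d0 by blast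
    then have "norm (G (x + t *\<^sub>R e) - G x) < e'" by (simp add: dist_norm)
    moreover have "\<bar>e \<bullet> (G (x + t *\<^sub>R e) - G x)\<bar> \<le> norm (G (x + t *\<^sub>R e) - G x)"
      using Cauchy_Schwarz_ineq2[of e "G (x + t *\<^sub>R e) - G x"] e by simp
    ultimately show ?thesis using t(3) by (simp add: inner_diff_right)
  qed
  show ?thesis
  proof (intro exI[of _ d] conjI ballI allI impI)
    show "0 < d" using d0 eta unfolding d_def by simp
    fix x h assume x: "x \<in> L" and h: "0 < h" "h < d"
      and H: "\<forall>b\<in>Basis. g x \<le> g (x + h *\<^sub>R b) \<and> g x \<le> g (x + h *\<^sub>R (-b))"
    have bnd: "\<bar>G x \<bullet> b\<bar> \<le> e'" if b: "b \<in> Basis" for b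
    proof -
      have "- e' < b \<bullet> G x" using one[OF x h, of b] H b by simp
      moreover have "- e' < (-b) \<bullet> G x" using one[OF x h, of "-b"] H b by simp
      ultimately show ?thesis by (simp add: inner_commute)
    qed
    have "norm (G x) \<le> (\<Sum>b\<in>Basis. \<bar>G x \<bullet> b\<bar>)" by (rule norm_le_l1)
    also have "\<dots> \<le> (\<Sum>b\<in>(Basis::'a set). e')" by (rule sum_mono) (rule bnd)
    also have "\<dots> = \<epsilon>" unfolding e'_def by simp
    finally show "norm (G x) \<le> \<epsilon>" .
  qed
qed

lemma sweep_props:
  "ps_sweep g D is y y2 \<Longrightarrow> g y2 \<le> g y \<and>
     (\<not> g y2 < g y \<longrightarrow> y2 = y \<and> (\<forall>i\<in>set is. \<forall>c\<in>ps_candidates y i D. g y \<le> g c))"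
proof (induction rule: ps_sweep.induct)
  case (1 y)
  then show ?case by simp
next
  case (2 i y y1 "is" y2)
  from 2(1) obtain c where c: "c \<in> ps_candidates y i D" "\<forall>c'\<in>ps_candidates y i D. g c \<le> g c'"
    "y1 = (if g c < g y then c else y)" unfolding ps_point_step_def by blast
  show ?case
  proof (cases "g c < g y")
    case True
    then show ?thesis using c 2(3) by auto
  next
    case False
    then have "y1 = y" using c by simp
    then show ?thesis using 2(3) c False by force
  qed
qed

definition lat :: "real \<Rightarrow> real^'l^'n \<Rightarrow> real^'l^'n \<Rightarrow> bool" where
  "lat D a b \<longleftrightarrow> (\<forall>i l. \<exists>q::int. b$i$l - a$i$l = of_int q * D)"

lemma lat_refl: "lat D a a"
  unfolding lat_def by (auto intro: exI[of _ 0])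

lemma lat_trans: "lat D a b \<Longrightarrow> lat D b c \<Longrightarrow> lat D a c"
  unfolding lat_def
proof (intro allI)
  fix i l
  assume "\<forall>i l. \<exists>q::int. b $ i $ l - a $ i $ l = of_int q * D" "\<forall>i l. \<exists>q::int. c $ i $ l - b $ i $ l = of_int q * D"
  then obtain q1 q2 :: int where "b $ i $ l - a $ i $ l = of_int q1 * D" "c $ i $ l - b $ i $ l = of_int q2 * D" by blast
  then have "c $ i $ l - a $ i $ l = of_int (q1 + q2) * D" by (simp add: algebra_simps)
  then show "\<exists>q::int. c $ i $ l - a $ i $ l = of_int q * D" by blast
qed

lemma lat_sym: "lat D a b \<Longrightarrow> lat D b a"
  unfolding lat_def
proof (intro allI)
  fix i l
  assume "\<forall>i l. \<exists>q::int. b $ i $ l - a $ i $ l = of_int q * D"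
  then obtain q :: int where "b $ i $ l - a $ i $ l = of_int q * D" by blast
  then have "a $ i $ l - b $ i $ l = of_int (- q) * D" by (simp add: algebra_simps)
  then show "\<exists>q::int. a $ i $ l - b $ i $ l = of_int q * D" by blast
qed

lemma ps_move_nth: "(ps_move y i l s D)$j$l' = y$j$l' + (if j = i \<and> l' = l then s*D else 0)"
  unfolding ps_move_def by (simp add: axis_def)

lemma ps_move_eq: "ps_move y i l s D = y + (s*D) *\<^sub>R axis i (axis l 1)"
  unfolding ps_move_def by (simp add: vec_eq_iff axis_def)

lemma lat_move: "s \<in> {-1,1} \<Longrightarrow> lat D y (ps_move y i l s D)"
  unfolding lat_def ps_move_nth
proof (intro allI)
  fix j l'
  assume s: "s \<in> {-1,1}"
  show "\<exists>q::int. y $ j $ l' + (if j = i \<and> l' = l then s * D else 0) - y $ j $ l' = of_int q * D"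
  proof (cases "j = i \<and> l' = l")
    case True
    then show ?thesis using s by (auto intro: exI[of _ "-1"] exI[of _ 1])
  next
    case False
    then show ?thesis by (auto intro: exI[of _ 0])
  qed
qed

lemma sweep_lat: "ps_sweep g D is y y2 \<Longrightarrow> lat D y y2"
proof (induction rule: ps_sweep.induct)
  case (1 y)
  then show ?case by (rule lat_refl)
next
  case (2 i y y1 "is" y2)
  from 2(1) obtain c where c: "c \<in> ps_candidates y i D" "y1 = (if g c < g y then c else y)"
    unfolding ps_point_step_def by blast
  have "lat D y y1"
  proof (cases "g c < g y")
    case True
    then show ?thesis using c lat_move[of _ D y i] unfolding ps_candidates_def by auto
  next
    case False
    then show ?thesis using c lat_refl by simp
  qed
  then show ?case using lat_trans 2(3) by blast
qed

lemma lat_dist: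
  fixes a b :: "real^'l^'n"
  assumes "lat D a b" "a \<noteq> b" "D > 0"
  shows "D \<le> dist a b"
proof -
  obtain i where i: "a$i \<noteq> b$i" using assms(2) by (auto simp: vec_eq_iff)
  then obtain l where l: "a$i$l \<noteq> b$i$l" by (auto simp: vec_eq_iff)
  obtain q :: int where q: "b$i$l - a$i$l = of_int q * D" using assms(1) unfolding lat_def by blast
  have "q \<noteq> 0" using q l by auto
  then have "1 \<le> \<bar>of_int q :: real\<bar>" by linarith
  then have "D \<le> \<bar>of_int q * D\<bar>" using assms(3) by (simp add: abs_mult)
  also have "\<dots> = \<bar>(b - a)$i$l\<bar>" using q by simp
  also have "\<dots> \<le> norm ((b - a)$i)" using component_le_norm_cart by blast
  also have "\<dots> \<le> norm (b - a)" by (rule Finite_Cartesian_Product.norm_nth_le)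
  finally show ?thesis by (simp add: dist_norm norm_minus_commute)
qed

theorem mainTheorem1:
  fixes \<delta> :: "real^('n::{finite,linorder})^('n::{finite,linorder})"
    and z0 :: "real^('l::finite)^('n::{finite,linorder})"
    and D0 :: real and \<eta> :: real
    and z :: "nat \<Rightarrow> real^('l::finite)^('n::{finite,linorder})" and D :: "nat \<Rightarrow> real"
  assumes "D0 > 0"
    and "pattern_search_seq (mds_stress \<delta>) z0 D0 z D"
    and "closed {x :: real^('l::finite)^('n::{finite,linorder}). mds_stress \<delta> x \<le> mds_stress \<delta> z0}"
    and "bounded {x :: real^('l::finite)^('n::{finite,linorder}). mds_stress \<delta> x \<le> mds_stress \<delta> z0}"
    and "\<eta> > 0"
    and "\<exists>G. (\<forall>x\<in>(\<Union>a\<in>{x :: real^('l::finite)^('n::{finite,linorder}). mds_stress \<delta> x \<le> mds_stress \<delta> z0}. ball a \<eta>).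
                 GDERIV (mds_stress \<delta>) x :> G x)
           \<and> continuous_on (\<Union>a\<in>{x :: real^('l::finite)^('n::{finite,linorder}). mds_stress \<delta> x \<le> mds_stress \<delta> z0}. ball a \<eta>) G"
  shows "liminf (\<lambda>k. ereal (norm (gradient (mds_stress \<delta>) (z k)))) = 0"
proof -
  let ?g = "mds_stress \<delta>"
  define L where "L = {x :: real^('l::finite)^('n::{finite,linorder}). ?g x \<le> ?g z0}"
  define U where "U = (\<Union>a\<in>L. ball a \<eta>)"
  from assms(6) obtain G where G: "\<forall>x\<in>U. GDERIV ?g x :> G x" "continuous_on U G"
    unfolding U_def L_def by blast
  have cL: "compact L" using assms(3,4) unfolding L_def by (simp add: compact_eq_bounded_closed)
  have z0: "z 0 = z0" and D0: "D 0 = D0" using assms(2) unfolding pattern_search_seq_def by auto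
  have Dstep: "D (Suc k) = (if ?g (z (Suc k)) < ?g (z k) then D k else D k / 2)" for k
    using assms(2) unfolding pattern_search_seq_def by auto
  have ep: "ps_sweep ?g (D k) (sorted_list_of_set UNIV) (z k) (z (Suc k))" for k
    using assms(2) unfolding pattern_search_seq_def ps_epoch_def by auto
  have dec: "?g (z (Suc k)) \<le> ?g (z k)" for k using sweep_props[OF ep[of k]] by simp
  have gmono: "m \<le> n \<Longrightarrow> ?g (z n) \<le> ?g (z m)" for m n
  proof (induction n rule: dec_induct)
    case base then show ?case by simp
  next
    case (step n) then show ?case using dec[of n] by linarith
  qed
  have zL: "z k \<in> L" for k using gmono[of 0 k] z0 unfolding L_def by simp
  have Dpos: "D k > 0" for k
    by (induction k) (auto simp: D0 assms(1) Dstep)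
  have Dmono: "m \<le> k \<Longrightarrow> D k \<le> D m" for m k
  proof (induction k rule: dec_induct)
    case base then show ?case by simp
  next
    case (step k) then show ?case using Dpos[of k] by (auto simp: Dstep)
  qed
  have unsucc: "?g (z k) \<le> ?g (ps_move (z k) i l s (D k))"
    if "\<not> ?g (z (Suc k)) < ?g (z k)" "s \<in> {-1,1}" for k i l s
  proof -
    have "\<forall>i\<in>set (sorted_list_of_set (UNIV::'n set)). \<forall>c\<in>ps_candidates (z k) i (D k). ?g (z k) \<le> ?g c"
      using sweep_props[OF ep[of k]] that(1) by blast
    moreover have "ps_move (z k) i l s (D k) \<in> ps_candidates (z k) i (D k)"
      using that(2) unfolding ps_candidates_def by blast
    ultimately show ?thesis by simp
  qed
  have A: "\<exists>k\<ge>M. \<not> ?g (z (Suc k)) < ?g (z k)" for M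
  proof (rule ccontr)
    assume "\<not> ?thesis"
    then have succ: "k \<ge> M \<Longrightarrow> ?g (z (Suc k)) < ?g (z k)" for k by auto
    have DM: "k \<ge> M \<Longrightarrow> D k = D M" for k
    proof (induction k rule: dec_induct)
      case base then show ?case by simp
    next
      case (step k) then show ?case using succ[of k] by (simp add: Dstep)
    qed
    have latM: "k \<ge> M \<Longrightarrow> lat (D M) (z M) (z k)" for k
    proof (induction k rule: dec_induct)
      case base then show ?case by (rule lat_refl)
    next
      case (step k)
      have "lat (D M) (z k) (z (Suc k))" using sweep_lat[OF ep[of k]] DM[OF step(1)] by simp
      with step(3) show ?case by (rule lat_trans)
    qed
    have strict: "M \<le> m \<Longrightarrow> m < n \<Longrightarrow> ?g (z n) < ?g (z m)" for m n
      using gmono[of "Suc m" n] succ[of m] by simp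
    have sep: "D M \<le> dist (z m) (z n)" if "M \<le> m" "m < n" for m n
    proof -
      have "lat (D M) (z m) (z M)" by (rule lat_sym[OF latM[OF that(1)]])
      moreover have "lat (D M) (z M) (z n)" using latM[of n] that by simp
      ultimately have "lat (D M) (z m) (z n)" by (rule lat_trans)
      moreover have "z m \<noteq> z n"
      proof
        assume "z m = z n"
        with strict[OF that] show False by simp
      qed
      ultimately show ?thesis by (rule lat_dist[OF _ _ Dpos[of M]])
    qed
    have fL: "\<And>n. (\<lambda>n. z (M + n)) n \<in> L" using zL by simp
    obtain l r where lr: "strict_mono r" "((\<lambda>n. z (M + n)) \<circ> r) \<longlonglongrightarrow> l"
      using cL[unfolded compact_def, rule_format, of "\<lambda>n. z (M + n)", OF fL] by blast
    have "Cauchy ((\<lambda>n. z (M + n)) \<circ> r)" using lr(2) by (rule LIMSEQ_imp_Cauchy)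
    then obtain N where N: "\<forall>m\<ge>N. \<forall>n\<ge>N. dist (((\<lambda>n. z (M + n)) \<circ> r) m) (((\<lambda>n. z (M + n)) \<circ> r) n) < D M"
      using Dpos[of M] unfolding Cauchy_def by blast
    have "r N < r (Suc N)" using lr(1) by (simp add: strict_mono_def)
    then have "D M \<le> dist (z (M + r N)) (z (M + r (Suc N)))" by (intro sep) auto
    moreover have "dist (z (M + r N)) (z (M + r (Suc N))) < D M" using N by auto
    ultimately show False by simp
  qed
  have B: "\<exists>M. \<forall>k\<ge>M. D k \<le> D0 / 2^j" for j
  proof (induction j)
    case 0
    then show ?case using Dmono[of 0] D0 by auto
  next
    case (Suc j)
    then obtain M where M: "\<forall>k\<ge>M. D k \<le> D0 / 2^j" by blast
    obtain k where k: "k \<ge> M" "\<not> ?g (z (Suc k)) < ?g (z k)" using A by blast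
    have "D (Suc k) \<le> D0 / 2^(Suc j)" using M k by (simp add: Dstep)
    then show ?case using Dmono[of "Suc k"] by (meson order_trans)
  qed
  have der: "(?g has_derivative (\<lambda>v. v \<bullet> G y)) (at y)" if "y \<in> (\<Union>a\<in>L. ball a \<eta>)" for y
    using G(1) that unfolding U_def gderiv_def by blast
  have C: "\<exists>m\<ge>n. norm (G (z m)) \<le> e" if e: "e > 0" for e n
  proof -
    obtain d where d: "d > 0" "\<forall>x\<in>L. \<forall>h. 0 < h \<longrightarrow> h < d \<longrightarrow>
       (\<forall>b\<in>Basis. ?g x \<le> ?g (x + h *\<^sub>R b) \<and> ?g x \<le> ?g (x + h *\<^sub>R (-b))) \<longrightarrow> norm (G x) \<le> e"
      using grad_small[OF cL assms(5) der G(2)[unfolded U_def] e] by blast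
    obtain j where j: "(1/2::real)^j < d / D0" using real_arch_pow_inv[of "d/D0" "1/2"] d assms(1) by auto
    obtain M where M: "\<forall>k\<ge>M. D k \<le> D0 / 2^j" using B by blast
    obtain k where k: "k \<ge> max n M" "\<not> ?g (z (Suc k)) < ?g (z k)" using A by blast
    have "D k \<le> D0 * (1/2)^j" using M k by (simp add: power_one_over)
    also have "\<dots> < d" using j assms(1) by (simp add: field_simps)
    finally have Dk: "D k < d" .
    have "\<forall>b\<in>Basis. ?g (z k) \<le> ?g (z k + D k *\<^sub>R b) \<and> ?g (z k) \<le> ?g (z k + D k *\<^sub>R (-b))"
    proof
      fix b :: "real^('l::finite)^('n::{finite,linorder})" assume "b \<in> Basis"
      then obtain i l where b: "b = axis i (axis l 1)" unfolding Basis_vec_def by auto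
      have "z k + D k *\<^sub>R b = ps_move (z k) i l 1 (D k)" unfolding b ps_move_eq by simp
      moreover have "z k + D k *\<^sub>R (-b) = ps_move (z k) i l (-1) (D k)" unfolding b ps_move_eq by simp
      ultimately show "?g (z k) \<le> ?g (z k + D k *\<^sub>R b) \<and> ?g (z k) \<le> ?g (z k + D k *\<^sub>R (-b))"
        using unsucc[OF k(2)] by simp
    qed
    then have "norm (G (z k)) \<le> e" using d(2)[rule_format, OF zL[of k] Dpos[of k] Dk] by blast
    then show ?thesis using k by auto
  qed
  have grad: "gradient ?g x = G x" if "x \<in> L" for x
  proof -
    have xU: "x \<in> U" unfolding U_def using that assms(5) by (auto intro!: bexI[of _ x])
    have "GDERIV ?g x :> G x" using G(1) xU by blast
    moreover have "v = G x" if "GDERIV ?g x :> v" for v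
    proof -
      have "(\<lambda>h. h \<bullet> v) = (\<lambda>h. h \<bullet> G x)"
        using that \<open>GDERIV ?g x :> G x\<close> unfolding gderiv_def by (rule has_derivative_unique)
      then have "(v - G x) \<bullet> v = (v - G x) \<bullet> G x" by metis
      then have "(v - G x) \<bullet> (v - G x) = 0" by (simp add: inner_diff_right)
      then show ?thesis by simp
    qed
    ultimately show ?thesis unfolding gradient_def by (rule the_equality)
  qed
  let ?f = "\<lambda>k. ereal (norm (gradient ?g (z k)))"
  have "liminf ?f \<le> 0"
    unfolding liminf_SUP_INF
  proof (rule SUP_least)
    fix n
    show "(INF m\<in>{n..}. ?f m) \<le> 0"
    proof (rule ereal_le_epsilon2)
      fix e :: real assume "0 < e"
      then obtain m where m: "m \<ge> n" "norm (G (z m)) \<le> e" using C by blast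
      have "(INF m\<in>{n..}. ?f m) \<le> ?f m" using m by (intro INF_lower) auto
      also have "\<dots> \<le> 0 + ereal e" using m grad[OF zL[of m]] by simp
      finally show "(INF m\<in>{n..}. ?f m) \<le> 0 + ereal e" .
    qed
  qed
  moreover have "0 \<le> liminf ?f"
    by (rule Liminf_bounded) simp
  ultimately show ?thesis by simp
qed

end
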